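(* Let $A$ be a non-empty set, $1\le p<\infty$, and let $P\colon\ell_p(A)\to\ell_p(A)$ be a contractive positive projection with constant diagonal $\alpha>0$. Then $n=1/\alpha\in\mathbb{N}$, and there exists a partition $\{A_i\}_i$ of $A$ into sets of size $n$ such that \[P\Big(\sum_{a\in A}\lambda_a e_a\Big)=\alpha\sum_i\Big(\sum_{a\in A_i}\lambda_a\Big)\chi_{A_i}\] whenever $\sum_{a\in A}|\lambda_a|^p<\infty$. In particular, if $A$ is countable, there is an enumeration of $A$ such that the matrix of $P$ is block diagonal with every diagonal block equal to $\alpha\mathbf{1}_n$ and all off-diagonal blocks equal to $\mathbf{0}_n$.
   Context: $\chi_B$ denotes the characteristic function of $B\subseteq A$ and $e_a=\chi_{\{a\}}$. $\mathbf{0}_n$ is the $n\times n$ zero block and $\mathbf{1}_n$ the $n\times n$ block of ones. Contractive means $\|P\|\le 1$; positive projection means linear, $P^2=P$, $P\ge0$. For a Dedekind complete vector lattice $X$, $\mathcal{L}^r(X)$ is the Dedekind complete vector lattice of regular operators; the center (operators $T$ with $\pm T\le\lambda\,\mathrm{id}_X$ for some $\lambda$) is a projection band in it, with band projection $\mathcal{D}$; $T$ has constant diagonal $\alpha$ if $\mathcal{D}(T)=\alpha\,\mathrm{id}_X$. For $X=\ell_p(A)$ this means $(Pe_a)(a)=\alpha$ for all $a\in A$. *)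

theory Defs
  imports "HOL-Analysis.Analysis"
begin

text \<open>The real sequence space ell_p(A), with the index set A given as a type 'a
  (types are non-empty, so A is non-empty).\<close>
definition lp :: "real \<Rightarrow> ('a \<Rightarrow> real) set" where
  "lp p = {f. (\<lambda>a. \<bar>f a\<bar> powr p) summable_on UNIV}"

definition lp_norm :: "real \<Rightarrow> ('a \<Rightarrow> real) \<Rightarrow> real" where
  "lp_norm p f = (\<Sum>\<^sub>\<infinity>a. \<bar>f a\<bar> powr p) powr (1 / p)"

definition unit_vec :: "'a \<Rightarrow> 'a \<Rightarrow> real" where
  "unit_vec a = indicator {a}"

definition lp_linear_op :: "real \<Rightarrow> (('a \<Rightarrow> real) \<Rightarrow> ('a \<Rightarrow> real)) \<Rightarrow> bool" where
  "lp_linear_op p P \<longleftrightarrow>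
     (\<forall>f\<in>lp p. P f \<in> lp p) \<and>
     (\<forall>f\<in>lp p. \<forall>g\<in>lp p. P (\<lambda>a. f a + g a) = (\<lambda>a. P f a + P g a)) \<and>
     (\<forall>f\<in>lp p. \<forall>c::real. P (\<lambda>a. c * f a) = (\<lambda>a. c * P f a))"

definition contractive_positive_projection ::
    "real \<Rightarrow> (('a \<Rightarrow> real) \<Rightarrow> ('a \<Rightarrow> real)) \<Rightarrow> bool" where
  "contractive_positive_projection p P \<longleftrightarrow>
     lp_linear_op p P \<and>
     (\<forall>f\<in>lp p. P (P f) = P f) \<and>
     (\<forall>f\<in>lp p. (\<forall>a. f a \<ge> 0) \<longrightarrow> (\<forall>a. P f a \<ge> 0)) \<and>
     (\<forall>f\<in>lp p. lp_norm p (P f) \<le> lp_norm p f)"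

definition constant_diagonal ::
    "(('a \<Rightarrow> real) \<Rightarrow> ('a \<Rightarrow> real)) \<Rightarrow> real \<Rightarrow> bool" where
  "constant_diagonal P \<alpha> \<longleftrightarrow> (\<forall>a. P (unit_vec a) a = \<alpha>)"

end

theory Submission
  imports Defs
begin


lemma nonneg_summable_cmp:
  fixes f g :: "'a \<Rightarrow> real"
  assumes "g summable_on A" "\<And>x. x\<in>A \<Longrightarrow> 0 \<le> f x" "\<And>x. x\<in>A \<Longrightarrow> f x \<le> g x"
  shows "f summable_on A"
proof -
  have "(\<lambda>x. norm (g x)) summable_on A \<longleftrightarrow> g summable_on A"
    by (rule summable_on_cong) (use assms in \<open>force intro: order.trans\<close>)
  then have "(\<lambda>x. norm (g x)) summable_on A" using assms(1) by simp
  then have "(\<lambda>x. norm (f x)) summable_on A"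
    by (rule Infinite_Sum.abs_summable_on_comparison_test) (use assms in \<open>force intro: order.trans\<close>)
  then show ?thesis by (rule summable_on_cong[THEN iffD1, rotated]) (use assms in auto)
qed

lemma lp_fin: "finite {a. f a \<noteq> 0} \<Longrightarrow> f \<in> lp p"
  unfolding lp_def mem_Collect_eq
proof -
  assume fin: "finite {a. f a \<noteq> 0}"
  show "(\<lambda>a. \<bar>f a\<bar> powr p) summable_on UNIV"
  proof -
    have "(\<lambda>a. \<bar>f a\<bar> powr p) summable_on {a. f a \<noteq> 0} \<longleftrightarrow> (\<lambda>a. \<bar>f a\<bar> powr p) summable_on UNIV"
      by (rule summable_on_cong_neutral) auto
    then show ?thesis using fin by simp
  qed
qed

lemma unit_vec_lp: "unit_vec b \<in> lp p"
proof (rule lp_fin)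
  have "{a. unit_vec b a \<noteq> 0} \<subseteq> {b}" by (auto simp: unit_vec_def indicator_def)
  then show "finite {a. unit_vec b a \<noteq> 0}" by (rule finite_subset) simp
qed

lemma lp_mono_abs:
  assumes "f \<in> lp p" "\<And>a. \<bar>g a\<bar> \<le> \<bar>f a\<bar>" "0 \<le> p"
  shows "g \<in> lp p"
proof -
  have "(\<lambda>a. \<bar>f a\<bar> powr p) summable_on UNIV" using assms(1) unfolding lp_def by simp
  then have "(\<lambda>a. \<bar>g a\<bar> powr p) summable_on UNIV"
  proof (rule nonneg_summable_cmp)
    fix x show "0 \<le> \<bar>g x\<bar> powr p" by simp
    show "\<bar>g x\<bar> powr p \<le> \<bar>f x\<bar> powr p" by (rule powr_mono2) (use assms in auto)
  qed
  then show ?thesis unfolding lp_def by simp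
qed

lemma lp_scale: "f \<in> lp p \<Longrightarrow> (\<lambda>a. c * f a) \<in> lp p"
proof -
  assume "f \<in> lp p"
  then have "(\<lambda>a. \<bar>c\<bar> powr p * \<bar>f a\<bar> powr p) summable_on UNIV"
    unfolding lp_def mem_Collect_eq by (rule summable_on_cmult_right)
  moreover have "\<bar>c\<bar> powr p * \<bar>f a\<bar> powr p = \<bar>c * f a\<bar> powr p" for a
    by (simp only: abs_mult powr_mult abs_ge_zero)
  ultimately show ?thesis unfolding lp_def mem_Collect_eq by simp
qed

lemma lp_add:
  assumes "f \<in> lp p" "g \<in> lp p" "0 \<le> p"
  shows "(\<lambda>a. f a + g a) \<in> lp p"
proof -
  have s: "(\<lambda>a. 2 powr p * (\<bar>f a\<bar> powr p + \<bar>g a\<bar> powr p)) summable_on UNIV"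
    using assms unfolding lp_def mem_Collect_eq by (intro summable_on_cmult_right summable_on_add)
  have "\<bar>f a + g a\<bar> powr p \<le> 2 powr p * (\<bar>f a\<bar> powr p + \<bar>g a\<bar> powr p)" for a
  proof -
    have m: "(max \<bar>f a\<bar> \<bar>g a\<bar>) powr p \<le> \<bar>f a\<bar> powr p + \<bar>g a\<bar> powr p"
      by (cases "\<bar>f a\<bar> \<le> \<bar>g a\<bar>") (simp_all add: max_def)
    have "\<bar>f a + g a\<bar> \<le> 2 * max \<bar>f a\<bar> \<bar>g a\<bar>" by linarith
    then have "\<bar>f a + g a\<bar> powr p \<le> (2 * max \<bar>f a\<bar> \<bar>g a\<bar>) powr p"
      using assms(3) by (intro powr_mono2) simp_all
    also have "\<dots> = 2 powr p * (max \<bar>f a\<bar> \<bar>g a\<bar>) powr p" by (rule powr_mult)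
    also have "2 powr p * (max \<bar>f a\<bar> \<bar>g a\<bar>) powr p \<le> 2 powr p * (\<bar>f a\<bar> powr p + \<bar>g a\<bar> powr p)"
      using m by (rule mult_left_mono) simp
    finally show ?thesis .
  qed
  then show ?thesis unfolding lp_def mem_Collect_eq
    by (intro nonneg_summable_cmp[OF s]) simp_all
qed



lemma lp_zero: "(\<lambda>a. 0::real) \<in> lp p"
  by (rule lp_fin) simp

lemma lp_sum: "finite F \<Longrightarrow> (\<And>b. b \<in> F \<Longrightarrow> g b \<in> lp p) \<Longrightarrow> 0 \<le> p \<Longrightarrow> (\<lambda>a. \<Sum>b\<in>F. g b a) \<in> lp p"
proof (induction F rule: finite_induct)
  case empty then show ?case using lp_zero by simp
next
  case (insert x F)
  then show ?case using lp_add[of "g x" p "\<lambda>a. \<Sum>b\<in>F. g b a"] by simp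
qed

lemma unit_vec_mult: "f b * unit_vec b a = (if b = a then f b else 0)"
  by (simp add: unit_vec_def indicator_def)

lemma restrict_eq: "finite F \<Longrightarrow> (\<lambda>a. \<Sum>b\<in>F. f b * unit_vec b a) = (\<lambda>a. if a \<in> F then f a else 0)"
  by (simp add: unit_vec_mult)

lemma lp_norm_le_imp_eq:
  assumes "g \<in> lp p" "h \<in> lp p" "0 < p" "\<And>a. 0 \<le> h a" "\<And>a. h a \<le> g a"
    and "lp_norm p g \<le> lp_norm p h"
  shows "g = h"
proof (rule ccontr)
  assume "g \<noteq> h"
  then obtain d where d: "g d \<noteq> h d" by auto
  with assms have dl: "h d < g d" by (metis order_less_le)
  define G where "G = (\<Sum>\<^sub>\<infinity>a. \<bar>g a\<bar> powr p)"
  define H where "H = (\<Sum>\<^sub>\<infinity>a. \<bar>h a\<bar> powr p)"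
  have hs: "((\<lambda>a. \<bar>h a\<bar> powr p) has_sum H) UNIV"
    using assms(2) unfolding lp_def H_def by auto
  have gs: "((\<lambda>a. \<bar>g a\<bar> powr p) has_sum G) UNIV"
    using assms(1) unfolding lp_def G_def by auto
  have "H < G"
  proof (rule has_sum_strict_mono_neutral[OF hs gs])
    fix x
    show "\<bar>h x\<bar> powr p \<le> \<bar>g x\<bar> powr p"
      using assms(4,5)[of x] assms(3) by (intro powr_mono2) auto
  next
    show "d \<in> UNIV" by simp
    show "if d \<in> UNIV then \<bar>h d\<bar> powr p < \<bar>g d\<bar> powr p else 0 < \<bar>g d\<bar> powr p"
      using dl assms(4)[of d] assms(3) by (auto intro: powr_less_mono2)
  qed auto
  moreover have "H \<ge> 0" unfolding H_def by (rule infsum_nonneg) simp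
  ultimately have "H powr (1/p) < G powr (1/p)"
    using assms(3) by (intro powr_less_mono2) auto
  then show False using assms(6) unfolding lp_norm_def G_def H_def by simp
qed

lemma coord_le_norm:
  assumes "g \<in> lp p" "0 < p"
  shows "\<bar>g b\<bar> \<le> lp_norm p g"
proof -
  have "\<bar>g b\<bar> powr p \<le> (\<Sum>\<^sub>\<infinity>a. \<bar>g a\<bar> powr p)"
    using finite_sum_le_infsum[of "\<lambda>a. \<bar>g a\<bar> powr p" UNIV "{b}"] assms(1)
    unfolding lp_def by auto
  then have "(\<bar>g b\<bar> powr p) powr (1/p) \<le> (\<Sum>\<^sub>\<infinity>a. \<bar>g a\<bar> powr p) powr (1/p)"
    using assms(2) by (intro powr_mono2) auto
  also have "(\<bar>g b\<bar> powr p) powr (1/p) = \<bar>g b\<bar>"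
    using assms(2) by (simp add: powr_powr)
  finally show ?thesis unfolding lp_norm_def .
qed

lemma lp_norm_fin:
  assumes "finite S" "\<And>d. d \<notin> S \<Longrightarrow> f d = 0"
  shows "lp_norm p f = (\<Sum>d\<in>S. \<bar>f d\<bar> powr p) powr (1/p)"
proof -
  have "(\<Sum>\<^sub>\<infinity>a. \<bar>f a\<bar> powr p) = (\<Sum>\<^sub>\<infinity>a\<in>S. \<bar>f a\<bar> powr p)"
    by (rule infsum_cong_neutral) (use assms in auto)
  then show ?thesis unfolding lp_norm_def using assms(1) by simp
qed




locale cpp =
  fixes p :: real and P :: "('a \<Rightarrow> real) \<Rightarrow> ('a \<Rightarrow> real)" and \<alpha> :: real
  assumes p1: "1 \<le> p" and cpp: "contractive_positive_projection p P"
    and diag: "constant_diagonal P \<alpha>" and apos: "\<alpha> > 0"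
begin

lemma p0: "0 < p" using p1 by simp

lemma P_lp: "f \<in> lp p \<Longrightarrow> P f \<in> lp p"
  using cpp unfolding contractive_positive_projection_def lp_linear_op_def by blast
lemma P_add: "f \<in> lp p \<Longrightarrow> g \<in> lp p \<Longrightarrow> P (\<lambda>a. f a + g a) = (\<lambda>a. P f a + P g a)"
  using cpp unfolding contractive_positive_projection_def lp_linear_op_def by blast
lemma P_scale: "f \<in> lp p \<Longrightarrow> P (\<lambda>a. c * f a) = (\<lambda>a. c * P f a)"
  using cpp unfolding contractive_positive_projection_def lp_linear_op_def by blast
lemma P_idem: "f \<in> lp p \<Longrightarrow> P (P f) = P f"
  using cpp unfolding contractive_positive_projection_def by blast
lemma P_pos: "f \<in> lp p \<Longrightarrow> (\<And>a. f a \<ge> 0) \<Longrightarrow> P f a \<ge> 0"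
  using cpp unfolding contractive_positive_projection_def by blast
lemma P_contr: "f \<in> lp p \<Longrightarrow> lp_norm p (P f) \<le> lp_norm p f"
  using cpp unfolding contractive_positive_projection_def by blast

definition u where "u b = P (unit_vec b)"

lemma u_lp: "u b \<in> lp p" unfolding u_def by (intro P_lp unit_vec_lp)
lemma u_nonneg: "0 \<le> u b c" unfolding u_def
  by (rule P_pos[OF unit_vec_lp]) (simp add: unit_vec_def)
lemma u_diag: "u b b = \<alpha>" using diag unfolding u_def constant_diagonal_def by blast
lemma u_fix: "P (u b) = u b" unfolding u_def by (intro P_idem unit_vec_lp)

lemma P_zero: "P (\<lambda>a. 0) = (\<lambda>a. 0)"
proof -
  have "P (\<lambda>a. 0 * unit_vec undefined a) = (\<lambda>a. 0 * P (unit_vec undefined) a)"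
    by (rule P_scale[OF unit_vec_lp])
  then show ?thesis by simp
qed

lemma P_sum_unit: "finite F \<Longrightarrow> P (\<lambda>a. \<Sum>b\<in>F. c b * unit_vec b a) = (\<lambda>a. \<Sum>b\<in>F. c b * u b a)"
proof (induction F rule: finite_induct)
  case empty then show ?case using P_zero by simp
next
  case (insert x F)
  have l1: "(\<lambda>a. c x * unit_vec x a) \<in> lp p" by (intro lp_scale unit_vec_lp)
  have l2: "(\<lambda>a. \<Sum>b\<in>F. c b * unit_vec b a) \<in> lp p"
    using insert(1) p0 by (intro lp_sum lp_scale unit_vec_lp) auto
  have "P (\<lambda>a. \<Sum>b\<in>insert x F. c b * unit_vec b a) = P (\<lambda>a. c x * unit_vec x a + (\<Sum>b\<in>F. c b * unit_vec b a))"
    using insert by simp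
  also have "\<dots> = (\<lambda>a. P (\<lambda>a. c x * unit_vec x a) a + P (\<lambda>a. \<Sum>b\<in>F. c b * unit_vec b a) a)"
    by (rule P_add[OF l1 l2])
  also have "\<dots> = (\<lambda>a. c x * u x a + (\<Sum>b\<in>F. c b * u b a))"
    using insert.IH P_scale[OF unit_vec_lp] unfolding u_def by simp
  finally show ?case using insert by simp
qed

lemma L1:
  assumes "y \<in> lp p" "\<And>a. 0 \<le> y a" "P y = y" "finite F"
  shows "(\<Sum>b\<in>F. y b * u b c) \<le> y c"
proof -
  define r where "r = (\<lambda>a. if a \<in> F then y a else 0)"
  define t where "t = (\<lambda>a. if a \<in> F then 0 else y a)"
  have rl: "r \<in> lp p" unfolding r_def
    by (rule lp_fin) (rule finite_subset[OF _ assms(4)], auto)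
  have tl: "t \<in> lp p" unfolding t_def
    by (rule lp_mono_abs[OF assms(1)]) (use p0 in auto)
  have yeq: "y = (\<lambda>a. t a + r a)" unfolding t_def r_def by auto
  have Pr: "P r = (\<lambda>a. \<Sum>b\<in>F. y b * u b a)"
    unfolding r_def using P_sum_unit[OF assms(4), of y] restrict_eq[OF assms(4), of y] by simp
  have "y c = P y c" using assms(3) by simp
  also have "\<dots> = P t c + P r c" by (subst yeq, subst P_add[OF tl rl]) simp
  also have "\<dots> \<ge> P r c" using P_pos[OF tl] assms(2) unfolding t_def by auto
  finally show ?thesis using Pr by simp
qed


lemma L2:
  assumes "x \<in> lp p" "P x = x"
  shows "P (\<lambda>a. max (x a) 0) = (\<lambda>a. max (x a) 0)"
proof -
  define pp where "pp = (\<lambda>a. max (x a) 0)"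
  define nn where "nn = (\<lambda>a. max (- x a) 0)"
  have ppl: "pp \<in> lp p" unfolding pp_def by (rule lp_mono_abs[OF assms(1)]) (use p0 in auto)
  have nnl: "nn \<in> lp p" unfolding nn_def by (rule lp_mono_abs[OF assms(1)]) (use p0 in auto)
  have eq: "pp = (\<lambda>a. x a + nn a)" unfolding pp_def nn_def by (auto simp: max_def)
  have "P pp = (\<lambda>a. P x a + P nn a)" by (subst eq, rule P_add[OF assms(1) nnl])
  then have "P pp a \<ge> x a" for a using P_pos[OF nnl, of a] assms(2) unfolding nn_def by simp
  moreover have "P pp a \<ge> 0" for a using P_pos[OF ppl] unfolding pp_def by simp
  ultimately have ge: "pp a \<le> P pp a" for a unfolding pp_def by simp
  have "P pp = pp"
    by (rule lp_norm_le_imp_eq[OF P_lp[OF ppl] ppl p0 _ ge P_contr[OF ppl]]) (simp add: pp_def)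
  then show ?thesis unfolding pp_def .
qed

lemma L3:
  assumes "x \<in> lp p" "P x = x"
  shows "max (x b) 0 * u b c \<le> max (x c) 0"
proof -
  have "(\<Sum>b'\<in>{b}. max (x b') 0 * u b' c) \<le> max (x c) 0"
    by (rule L1[OF lp_mono_abs[OF assms(1)] _ L2[OF assms]]) (use p0 in auto)
  then show ?thesis by simp
qed

definition R where "R a c \<longleftrightarrow> 0 < u a c"

lemma u_trans: "u a c * u c b \<le> u a b"
proof -
  have "(\<Sum>x\<in>{c}. u a x * u x b) \<le> u a b" by (rule L1[OF u_lp u_nonneg u_fix]) simp
  then show ?thesis by simp
qed

lemma R_trans: "R a c \<Longrightarrow> R c b \<Longrightarrow> R a b"
  unfolding R_def using u_trans[of a c b] by (meson mult_pos_pos order_less_le_trans)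

lemma R_refl: "R a a" unfolding R_def using u_diag apos by simp

lemma not_R: "\<not> R a c \<Longrightarrow> u a c = 0"
  unfolding R_def using u_nonneg[of a c] by simp

lemma comb_lp: "(\<lambda>d. u a d + (- l) * u c d) \<in> lp p"
  using p0 by (intro lp_add u_lp lp_scale) auto

lemma comb_fix: "P (\<lambda>d. u a d + (- l) * u c d) = (\<lambda>d. u a d + (- l) * u c d)"
proof -
  have "P (\<lambda>d. u a d + (- l) * u c d) = (\<lambda>d. P (u a) d + P (\<lambda>d. (- l) * u c d) d)"
    by (rule P_add[OF u_lp lp_scale[OF u_lp]])
  also have "\<dots> = (\<lambda>d. u a d + (- l) * u c d)"
    by (simp only: P_scale[OF u_lp] u_fix)
  finally show ?thesis .
qed

lemma LC: "max (u a b - l * u c b) 0 * u b d \<le> max (u a d - l * u c d) 0"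
proof -
  have "max (u a b + (- l) * u c b) 0 * u b d \<le> max (u a d + (- l) * u c d) 0"
    by (rule L3[OF comb_lp comb_fix])
  then show ?thesis by simp
qed

lemma R_sym: assumes "R a c" shows "R c a"
proof (rule ccontr)
  assume "\<not> R c a"
  then have z: "u c a = 0" by (rule not_R)
  define l where "l = u a c / \<alpha>"
  have "max (u a a - l * u c a) 0 * u a c \<le> max (u a c - l * u c c) 0" by (rule LC)
  moreover have "u a c - l * u c c = 0" unfolding l_def u_diag using apos by simp
  moreover have "max (u a a - l * u c a) 0 * u a c > 0"
    using z u_diag apos assms unfolding R_def by simp
  ultimately show False by simp
qed

lemma R_ineq:
  assumes "R a c" "R a d"
  shows "u a b * u c d \<le> u a d * u c b"
proof (rule ccontr)
  assume "\<not> ?thesis"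
  then have gt: "u a b * u c d > u a d * u c b" by simp
  have Rcd: "R c d" using R_trans[OF R_sym[OF assms(1)] assms(2)] .
  then have ucd: "u c d > 0" unfolding R_def .
  define l where "l = u a d / u c d"
  have xb: "u a b - l * u c b > 0"
  proof -
    have "u a d * u c b < u a b * u c d" using gt .
    then have "u a d * u c b / u c d < u a b" using ucd by (simp add: divide_less_eq)
    then show ?thesis unfolding l_def by simp
  qed
  have xd: "u a d - l * u c d = 0" unfolding l_def using ucd by simp
  have "max (u a b - l * u c b) 0 * u b d \<le> max (u a d - l * u c d) 0" by (rule LC)
  then have "(u a b - l * u c b) * u b d \<le> 0" using xb xd by simp
  then have ubd: "u b d \<le> 0" using xb by (simp add: mult_le_0_iff)
  have "l * u c b \<ge> 0" unfolding l_def using u_nonneg[of a d] u_nonneg[of c b] ucd by simp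
  then have "R a b" using xb unfolding R_def by simp
  then have "R b d" using R_trans[OF R_sym assms(2)] by blast
  then show False using ubd unfolding R_def by simp
qed

lemma R_prop:
  assumes "R a c"
  shows "u a b * \<alpha> = u a c * u c b"
proof (cases "R a b")
  case True
  have "u a b * u c c \<le> u a c * u c b" by (rule R_ineq[OF assms assms])
  moreover have "u a c * u c b \<le> u a b * u c c" by (rule R_ineq[OF assms True])
  ultimately show ?thesis using u_diag by (simp add: mult.commute)
next
  case False
  then have "\<not> R c b" using R_trans[OF assms] by blast
  then show ?thesis using not_R[OF False] not_R by simp
qed


definition S where "S a = {c. R a c}"

lemma term_sq: "R a b \<Longrightarrow> u a b * u b a = \<alpha> * \<alpha>"
  using R_prop[of a b a] u_diag by simp

lemma S_fin: "finite (S a)"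
proof -
  have "card G \<le> nat \<lfloor>1 / \<alpha>\<rfloor>" if G: "G \<subseteq> S a" "finite G" for G
  proof -
    have "(\<Sum>b\<in>G. u a b * u b a) \<le> u a a" by (rule L1[OF u_lp u_nonneg u_fix G(2)])
    moreover have "(\<Sum>b\<in>G. u a b * u b a) = real (card G) * (\<alpha> * \<alpha>)"
      using G(1) term_sq unfolding S_def by (simp add: subset_iff)
    ultimately have "real (card G) * \<alpha> * \<alpha> \<le> 1 * \<alpha>" using u_diag by (simp add: mult.assoc)
    then have "real (card G) * \<alpha> \<le> 1" using apos by (simp add: mult_le_cancel_right)
    then have "real (card G) \<le> 1 / \<alpha>" using apos by (simp add: le_divide_eq)
    then show ?thesis by (simp add: le_nat_floor)
  qed
  then show ?thesis using finite_if_finite_subsets_card_bdd by blast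
qed

lemma a_in_S: "a \<in> S a" unfolding S_def using R_refl by simp

lemma u_restrict: "u a = (\<lambda>d. \<Sum>b\<in>S a. u a b * unit_vec b d)"
  by (subst restrict_eq[OF S_fin]) (auto simp: S_def not_R)

lemma S_card: "real (card (S a)) * \<alpha> = 1"
proof -
  have "P (u a) = (\<lambda>d. \<Sum>b\<in>S a. u a b * u b d)"
    by (subst u_restrict, rule P_sum_unit[OF S_fin])
  then have "u a a = (\<Sum>b\<in>S a. u a b * u b a)" using u_fix by metis
  also have "\<dots> = real (card (S a)) * (\<alpha> * \<alpha>)"
    using term_sq unfolding S_def by simp
  finally have "real (card (S a)) * \<alpha> * \<alpha> = 1 * \<alpha>" using u_diag by (simp add: mult.assoc)
  then show ?thesis using apos by simp
qed

lemma alpha_le1: "\<alpha> \<le> 1"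
proof -
  have "card (S a) \<ge> 1" for a using S_fin a_in_S
    by (metis One_nat_def Suc_leI card_gt_0_iff empty_iff)
  then have "real (card (S undefined)) \<ge> 1" by simp
  then have "1 * \<alpha> \<le> real (card (S undefined)) * \<alpha>" using apos by (intro mult_right_mono) auto
  then show ?thesis using S_card[of undefined] by simp
qed


lemma deriv_h:
  fixes N :: real
  shows "((\<lambda>t. N - \<alpha> powr p + (\<alpha> - t) powr p - (1 - t) powr p * N) has_real_derivative
          (p * N - p * \<alpha> powr (p - 1))) (at 0)"
  using apos by (auto intro!: derivative_eq_intros)


lemma powr_inv_le:
  assumes "X powr (1/p) \<le> Y powr (1/p)" "0 \<le> X" "0 \<le> Y"
  shows "X \<le> Y"
proof (rule ccontr)
  assume "\<not> X \<le> Y"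
  then have "Y powr (1/p) < X powr (1/p)" using assms p0 by (intro powr_less_mono2) auto
  then show False using assms(1) by simp
qed

lemma off_S: "d \<notin> S a \<Longrightarrow> u a d = 0"
  unfolding S_def by (simp add: not_R)

lemma norm_S: "(\<Sum>d\<in>S a. u a d powr p) = \<alpha> powr (p - 1)"
proof -
  define N where "N = (\<Sum>d\<in>S a. u a d powr p)"
  have rest: "(\<Sum>d\<in>S a. g d) = g a + (\<Sum>d\<in>S a - {a}. g d)" for g :: "'a \<Rightarrow> real"
    using sum.remove[OF S_fin a_in_S] by simp
  have key: "(1 - t) powr p * N \<le> N - \<alpha> powr p + (\<alpha> - t) powr p" if t: "\<bar>t\<bar> < \<alpha>" for t
  proof -
    have t1: "0 < 1 - t" "0 < \<alpha> - t" using t alpha_le1 by auto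
    define f where "f = (\<lambda>d. u a d + (-t) * unit_vec a d)"
    have fl: "f \<in> lp p" unfolding f_def using p0 by (intro lp_add u_lp lp_scale unit_vec_lp) auto
    have Pf: "P f = (\<lambda>d. u a d + (-t) * u a d)"
      unfolding f_def by (simp only: P_add[OF u_lp lp_scale[OF unit_vec_lp]] P_scale[OF unit_vec_lp] u_fix u_def[symmetric])
    have uv0: "d \<noteq> a \<Longrightarrow> unit_vec a d = 0" for d by (simp add: unit_vec_def)
    have n1: "lp_norm p (P f) = (\<Sum>d\<in>S a. \<bar>u a d + (-t) * u a d\<bar> powr p) powr (1/p)"
      unfolding Pf by (rule lp_norm_fin[OF S_fin]) (simp add: off_S)
    have n2: "lp_norm p f = (\<Sum>d\<in>S a. \<bar>f d\<bar> powr p) powr (1/p)"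
      by (rule lp_norm_fin[OF S_fin]) (use a_in_S[of a] in \<open>auto simp: f_def off_S unit_vec_def indicator_def\<close>)
    have X: "(\<Sum>d\<in>S a. \<bar>u a d + (-t) * u a d\<bar> powr p) = (1 - t) powr p * N"
    proof -
      have "\<bar>u a d + (-t) * u a d\<bar> powr p = (1 - t) powr p * u a d powr p" for d
      proof -
        have e: "u a d + (-t) * u a d = (1 - t) * u a d" by (simp add: algebra_simps)
        have "(1 - t) * u a d \<ge> 0" using t1 u_nonneg[of a d] by simp
        then have "\<bar>u a d + (-t) * u a d\<bar> = (1 - t) * u a d" unfolding e by simp
        then show ?thesis by (simp add: powr_mult)
      qed
      then show ?thesis unfolding N_def by (simp add: sum_distrib_left)
    qed
    have Y: "(\<Sum>d\<in>S a. \<bar>f d\<bar> powr p) = (\<alpha> - t) powr p + (\<Sum>d\<in>S a - {a}. u a d powr p)"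
      using t1 by (subst rest) (simp add: f_def u_diag unit_vec_def abs_of_nonneg u_nonneg)
    have N': "N = \<alpha> powr p + (\<Sum>d\<in>S a - {a}. u a d powr p)"
      unfolding N_def by (subst rest) (simp add: u_diag)
    have "(\<Sum>d\<in>S a. \<bar>u a d + (-t) * u a d\<bar> powr p) \<le> (\<Sum>d\<in>S a. \<bar>f d\<bar> powr p)"
      by (rule powr_inv_le) (use P_contr[OF fl] n1 n2 in \<open>auto intro: sum_nonneg\<close>)
    then show ?thesis unfolding X Y using N' by simp
  qed
  define h where "h = (\<lambda>t. N - \<alpha> powr p + (\<alpha> - t) powr p - (1 - t) powr p * N)"
  have h0: "h 0 = 0" unfolding h_def by simp
  have "p * N - p * \<alpha> powr (p - 1) = 0"
  proof (rule DERIV_local_min[OF deriv_h[of N, folded h_def] apos])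
    show "\<forall>y. \<bar>0 - y\<bar> < \<alpha> \<longrightarrow> h 0 \<le> h y"
      using key unfolding h0 by (auto simp: h_def)
  qed
  then show ?thesis using p0 unfolding N_def by simp
qed

lemma R_val: assumes "R a c" shows "u a c = \<alpha>"
proof -
  have uac: "u a c > 0" using assms unfolding R_def .
  define k where "k = \<alpha> / u a c"
  have kpos: "k > 0" unfolding k_def using uac apos by simp
  have uc: "u c b = k * u a b" for b
    using R_prop[OF assms, of b] uac unfolding k_def by (simp add: field_simps)
  have Seq: "S c = S a"
    unfolding S_def using R_trans R_sym assms by blast
  have "\<alpha> powr (p - 1) = (\<Sum>d\<in>S c. u c d powr p)" by (rule norm_S[symmetric])
  also have "\<dots> = (\<Sum>d\<in>S a. k powr p * u a d powr p)"
    unfolding Seq uc using kpos u_nonneg by (simp add: powr_mult)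
  also have "\<dots> = k powr p * \<alpha> powr (p - 1)" by (simp add: sum_distrib_left[symmetric] norm_S)
  finally have "k powr p = 1" using apos by simp
  then have "k = 1"
  proof -
    assume kp: "k powr p = 1"
    have "\<not> k < 1" using powr_less_mono2[OF p0, of k 1] kpos kp by auto
    moreover have "\<not> 1 < k" using powr_less_mono2[OF p0, of 1 k] kp by auto
    ultimately show ?thesis by simp
  qed
  then show ?thesis unfolding k_def using uac by simp
qed


lemma S_eq: "R a c \<Longrightarrow> S c = S a"
  unfolding S_def using R_trans R_sym by blast

lemma P_expand:
  assumes fl: "f \<in> lp p" and B: "finite B" and zero: "\<And>a. a \<notin> B \<Longrightarrow> u a b = 0"
  shows "P f b = (\<Sum>a\<in>B. f a * u a b)"
proof -
  define D where "D = \<bar>P f b - (\<Sum>a\<in>B. f a * u a b)\<bar>"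
  define g where "g = (\<lambda>a. \<bar>f a\<bar> powr p)"
  have gs: "g summable_on UNIV" using fl unfolding lp_def g_def by simp
  have bound: "D \<le> \<epsilon> powr (1/p)" if eps: "\<epsilon> > 0" for \<epsilon>
  proof -
    obtain F0 where F0: "finite F0" "dist (sum g F0) (infsum g UNIV) \<le> \<epsilon>"
      using infsum_finite_approximation[OF gs eps] by blast
    define F where "F = F0 \<union> B"
    have Ff: "finite F" unfolding F_def using F0(1) B by simp
    define r where "r = (\<lambda>a. if a \<in> F then f a else 0)"
    define t where "t = (\<lambda>a. if a \<in> F then 0 else f a)"
    have rl: "r \<in> lp p" unfolding r_def
      by (rule lp_fin) (rule finite_subset[OF _ Ff], auto)
    have tl: "t \<in> lp p" unfolding t_def
      by (rule lp_mono_abs[OF fl]) (use p0 in auto)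
    have feq: "f = (\<lambda>a. t a + r a)" unfolding t_def r_def by auto
    have Pr: "P r = (\<lambda>a. \<Sum>c\<in>F. f c * u c a)"
      unfolding r_def using P_sum_unit[OF Ff, of f] restrict_eq[OF Ff, of f] by simp
    have "(\<Sum>c\<in>F. f c * u c b) = (\<Sum>c\<in>B. f c * u c b)"
      by (rule sum.mono_neutral_right[OF Ff]) (auto simp: F_def zero)
    moreover have "P f b = P t b + P r b" by (subst feq, subst P_add[OF tl rl]) simp
    ultimately have "D = \<bar>P t b\<bar>" unfolding D_def Pr by simp
    also have "\<dots> \<le> lp_norm p (P t)" by (rule coord_le_norm[OF P_lp[OF tl] p0])
    also have "\<dots> \<le> lp_norm p t" by (rule P_contr[OF tl])
    also have "\<dots> \<le> \<epsilon> powr (1/p)"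
    proof -
      have ts: "(\<lambda>a. \<bar>t a\<bar> powr p) summable_on UNIV" using tl unfolding lp_def by simp
      have ss: "(\<lambda>a. if a \<in> F then g a else 0) summable_on UNIV"
      proof -
        have "(\<lambda>a. if a \<in> F then g a else 0) summable_on F \<longleftrightarrow> (\<lambda>a. if a \<in> F then g a else 0) summable_on UNIV"
          by (rule summable_on_cong_neutral) auto
        then show ?thesis using Ff by simp
      qed
      have sF: "(\<Sum>\<^sub>\<infinity>a. if a \<in> F then g a else 0) = sum g F"
      proof -
        have "(\<Sum>\<^sub>\<infinity>a. if a \<in> F then g a else 0) = (\<Sum>\<^sub>\<infinity>a\<in>F. g a)"
          by (rule infsum_cong_neutral) auto
        then show ?thesis using Ff by simp
      qed
      have "g = (\<lambda>a. \<bar>t a\<bar> powr p + (if a \<in> F then g a else 0))"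
        unfolding g_def t_def by auto
      then have "infsum g UNIV = (\<Sum>\<^sub>\<infinity>a. \<bar>t a\<bar> powr p) + sum g F"
        using infsum_add[OF ts ss] sF by metis
      moreover have "sum g F0 \<le> sum g F"
        by (rule sum_mono2[OF Ff]) (auto simp: F_def g_def)
      moreover have "sum g F \<le> infsum g UNIV"
        by (rule finite_sum_le_infsum[OF gs Ff]) (auto simp: g_def)
      ultimately have "(\<Sum>\<^sub>\<infinity>a. \<bar>t a\<bar> powr p) \<le> \<epsilon>" using F0(2) by (simp add: dist_real_def)
      then show ?thesis unfolding lp_norm_def using p0
        by (intro powr_mono2) (auto intro: infsum_nonneg)
    qed
    finally show ?thesis .
  qed
  have "D = 0"
  proof (rule ccontr)
    assume "D \<noteq> 0"
    then have Dp: "D > 0" unfolding D_def by simp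
    have "D \<le> ((D/2) powr p) powr (1/p)" using Dp by (intro bound) simp
    also have "\<dots> = D / 2" using Dp p0 by (simp add: powr_powr)
    finally show False using Dp by simp
  qed
  then show ?thesis unfolding D_def by simp
qed

theorem main:
  "\<exists>n::nat. n \<ge> 1 \<and> 1 / \<alpha> = real n \<and>
           (\<exists>\<A> :: 'a set set.
              \<Union>\<A> = UNIV \<and> disjoint \<A> \<and>
              (\<forall>B\<in>\<A>. finite B \<and> card B = n) \<and>
              (\<forall>f\<in>lp p. \<forall>B\<in>\<A>. \<forall>b\<in>B. P f b = \<alpha> * (\<Sum>a\<in>B. f a)))"
proof -
  define n where "n = card (S undefined)"
  have cardS: "card (S a) = n" for a
  proof -
    have "real (card (S a)) * \<alpha> = real n * \<alpha>" using S_card unfolding n_def by simp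
    then show ?thesis using apos by simp
  qed
  have n1: "n \<ge> 1" unfolding n_def using S_fin a_in_S
    by (metis One_nat_def Suc_leI card_gt_0_iff empty_iff)
  have an: "1 / \<alpha> = real n" using S_card[of undefined] apos unfolding n_def by (simp add: field_simps)
  have U: "\<Union>(range S) = UNIV" using a_in_S by blast
  have disj: "disjoint (range S)"
  proof (rule pairwiseI)
    fix X Y assume "X \<in> range S" "Y \<in> range S" "X \<noteq> Y"
    then obtain x y where xy: "X = S x" "Y = S y" "S x \<noteq> S y" by blast
    show "disjnt X Y"
    proof (rule ccontr)
      assume "\<not> disjnt X Y"
      then obtain c where "c \<in> S x" "c \<in> S y" unfolding disjnt_def xy by blast
      then have Rx: "R x c" and Ry: "R y c" unfolding S_def by auto
      have "S c = S x" using Rx by (rule S_eq)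
      moreover have "S c = S y" using Ry by (rule S_eq)
      ultimately show False using xy by simp
    qed
  qed
  have form: "P f b = \<alpha> * (\<Sum>a\<in>B. f a)" if f: "f \<in> lp p" and B: "B \<in> range S" and b: "b \<in> B" for f B b
  proof -
    obtain c where Bc: "B = S c" using B by blast
    have Rcb: "R c b" using b Bc unfolding S_def by simp
    have z: "u a b = 0" if "a \<notin> B" for a
    proof (rule not_R, rule notI)
      assume "R a b"
      then have "R c a" using R_trans[OF Rcb R_sym] by blast
      then show False using that Bc unfolding S_def by simp
    qed
    have v: "u a b = \<alpha>" if "a \<in> B" for a
    proof -
      have "R c a" using that Bc unfolding S_def by simp
      then have "R a b" using R_trans[OF R_sym Rcb] by blast
      then show ?thesis by (rule R_val)
    qed
    have "P f b = (\<Sum>a\<in>B. f a * u a b)"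
      by (rule P_expand[OF f _ z]) (simp add: Bc S_fin)
    also have "\<dots> = (\<Sum>a\<in>B. f a * \<alpha>)" using v by simp
    also have "\<dots> = \<alpha> * (\<Sum>a\<in>B. f a)" by (simp add: sum_distrib_left mult.commute)
    finally show ?thesis .
  qed
  show ?thesis
    apply (rule exI[of _ n])
    apply (intro conjI n1 an)
    apply (rule exI[of _ "range S"])
    using U disj cardS S_fin form by auto
qed

end

theorem proposition3p2:
  fixes P :: "('a \<Rightarrow> real) \<Rightarrow> ('a \<Rightarrow> real)" and p \<alpha> :: real
  assumes "1 \<le> p"
    and "contractive_positive_projection p P"
    and "constant_diagonal P \<alpha>"
    and "\<alpha> > 0"
  shows "\<exists>n::nat. n \<ge> 1 \<and> 1 / \<alpha> = real n \<and>
           (\<exists>\<A> :: 'a set set.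
              \<Union>\<A> = UNIV \<and> disjoint \<A> \<and>
              (\<forall>B\<in>\<A>. finite B \<and> card B = n) \<and>
              (\<forall>f\<in>lp p. \<forall>B\<in>\<A>. \<forall>b\<in>B. P f b = \<alpha> * (\<Sum>a\<in>B. f a)))"
proof -
  interpret cpp p P \<alpha> using assms by unfold_locales
  show ?thesis by (rule main)
qed


end
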